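(* Let $q$ be a prime. Let $c, k, M$ be positive integers with $c < M < q$, and let $A(X) \in \mathbb{F}_q[X]$ be a nonzero polynomial with $\deg(A) < cq$ and $\mathsf{pdeg}(A) < k$. Then $$\left|\{\alpha \in \mathbb{F}_q : \mathsf{mult}(A, \alpha) \geq M\}\right| \leq \min\left( \frac{c}{M - c + 1}\cdot k + c,\; k\right).$$
   Context: For $A(X) \in \mathbb{F}_q[X]$, $A^{[\ell]}(X)$ is the $\ell$-th Hasse derivative (the coefficient of $Z^\ell$ in $A(X+Z)$ expanded in powers of $Z$). With $\Lambda(X) = X^q - X$, the $\ell$-th pseudoderivative is $A_{\langle \ell \rangle}(X) = A^{[\ell]}(X) \bmod \Lambda(X)$, and the pseudodegree is $\mathsf{pdeg}(A) = \max_{\ell \geq 0}\deg(A_{\langle \ell\rangle})$. For nonzero $A$ and $\alpha \in \mathbb{F}_q$, $\mathsf{mult}(A,\alpha)$ is the largest $r$ such that $(X-\alpha)^r$ divides $A(X)$. *)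

theory Defs
  imports "HOL-Computational_Algebra.Polynomial"
begin

text \<open>The l-th Hasse derivative: the coefficient of Z^l in A(X+Z), where A(X+Z) is
  viewed as a polynomial in Z with coefficients in F[X].\<close>
definition hasse_deriv :: "nat \<Rightarrow> 'a::comm_ring_1 poly \<Rightarrow> 'a poly" where
  "hasse_deriv l A = coeff (pcompose (map_poly (\<lambda>a. [:a:]) A) [:[:0, 1:], 1:]) l"

definition Lam :: "nat \<Rightarrow> 'a::comm_ring_1 poly" where
  "Lam q = monom 1 q - [:0, 1:]"

definition pseudo_deriv :: "nat \<Rightarrow> nat \<Rightarrow> 'a::field poly \<Rightarrow> 'a poly" where
  "pseudo_deriv q l A = hasse_deriv l A mod Lam q"

definition pdeg :: "nat \<Rightarrow> 'a::field poly \<Rightarrow> nat" where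
  "pdeg q A = Max (range (\<lambda>l. degree (pseudo_deriv q l A)))"

end

theory Submission
  imports Defs "HOL-Computational_Algebra.Computational_Algebra" "Jordan_Normal_Form.Determinant"
begin


abbreviation cpoly :: "'a::comm_ring_1 poly \<Rightarrow> 'a poly poly" where
  "cpoly f \<equiv> map_poly (\<lambda>a. [:a:]) f"

lemma mpc_add: "cpoly (f+g) = cpoly f + cpoly g"
  by (rule poly_eqI) (simp add: coeff_map_poly)
lemma mpc_smult: "cpoly (Polynomial.smult c g) = Polynomial.smult [:c:] (cpoly g)"
  by (rule poly_eqI) (simp add: coeff_map_poly)
lemma mpc_mult: "cpoly (f*g) = cpoly f * cpoly g"
  by (induct f) (auto simp: map_poly_pCons mpc_add mpc_smult)

definition TT :: "'a::comm_ring_1 poly \<Rightarrow> 'a poly poly" where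
  "TT f = pcompose (cpoly f) [:[:0,1:],1:]"

lemma hasse_TT: "hasse_deriv l f = coeff (TT f) l"
  by (simp add: hasse_deriv_def TT_def)

lemma TT_add: "TT (f + g) = TT f + TT g"
  by (simp add: TT_def mpc_add pcompose_add)
lemma TT_mult: "TT (f * g) = TT f * TT g"
  by (simp add: TT_def mpc_mult pcompose_mult)
lemma TT_0[simp]: "TT 0 = 0" by (simp add: TT_def)
lemma TT_1[simp]: "TT 1 = 1" by (simp add: TT_def pcompose_1)
lemma cpoly_const: "cpoly [:a:] = [:[:a:]:]" by (simp add: map_poly_pCons)
lemma TT_const: "TT [:a:] = [:[:a:]:]" by (simp add: TT_def cpoly_const)
lemma TT_uminus: "TT (- f) = - TT f"
  by (metis TT_add TT_0 add_eq_0_iff2)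
lemma TT_diff: "TT (f - g) = TT f - TT g"
  by (metis TT_add TT_uminus diff_conv_add_uminus)
lemma TT_power: "TT (f ^ n) = TT f ^ n"
  by (induct n) (auto simp: TT_mult)
lemma TT_sum: "TT (sum g A) = sum (\<lambda>i. TT (g i)) A"
  by (induct A rule: infinite_finite_induct) (auto simp: TT_add)
lemma TT_X: "TT [:0,1:] = [:[:0,1:],1:]"
proof -
  have "cpoly [:0,1:] = [:0,1:]" by (simp add: map_poly_pCons)
  then have "TT [:0,1:] = pcompose [:0,1:] [:[:0,1:],1:]" unfolding TT_def by metis
  also have "\<dots> = [:[:0,1:],1:]" by (simp only: pcompose_pCons pcompose_const) simp
  finally show ?thesis .
qed
lemma TT_smult: "TT (Polynomial.smult c p) = Polynomial.smult [:c:] (TT p)"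
proof -
  have "TT (Polynomial.smult c p) = TT ([:c:] * p)" by simp
  also have "\<dots> = [:[:c:]:] * TT p" by (simp only: TT_mult TT_const)
  finally show ?thesis by simp
qed
lemma TT_linear: "TT [:a,1:] = [:[:a,1:],1:]"
proof -
  have "[:a,1:] = [:a:] + [:0,1:]" by simp
  then have "TT [:a,1:] = [:[:a:]:] + [:[:0,1:],1:]" by (simp only: TT_add TT_const TT_X)
  then show ?thesis by simp
qed

lemma hasse_add: "hasse_deriv l (f + g) = hasse_deriv l f + hasse_deriv l g"
  by (simp add: hasse_TT TT_add)
lemma hasse_uminus: "hasse_deriv l (- f) = - hasse_deriv l f"
  by (simp add: hasse_TT TT_uminus)
lemma hasse_diff: "hasse_deriv l (f - g) = hasse_deriv l f - hasse_deriv l g"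
  by (simp add: hasse_TT TT_diff)
lemma hasse_sum: "hasse_deriv l (sum g A) = (\<Sum>i\<in>A. hasse_deriv l (g i))"
  by (simp add: hasse_TT TT_sum coeff_sum)
lemma hasse_0[simp]: "hasse_deriv l 0 = 0" by (simp add: hasse_TT)

lemma hasse_leibniz:
  "hasse_deriv l (f * g) = (\<Sum>a\<le>l. hasse_deriv a f * hasse_deriv (l - a) g)"
  by (simp add: hasse_TT TT_mult coeff_mult)

lemma coeff_lin_power:
  fixes c d :: "'b::comm_semiring_1"
  shows "coeff ([:c, d:] ^ n) l = of_nat (n choose l) * c ^ (n - l) * d ^ l"
proof (induct n arbitrary: l)
  case 0
  then show ?case by (cases l) auto
next
  case (Suc n)
  have e: "[:c, d:] ^ Suc n = Polynomial.smult c ([:c, d:] ^ n) + pCons 0 (Polynomial.smult d ([:c, d:] ^ n))"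
    by (simp add: algebra_simps pCons_eq_iff)
  show ?case
  proof (cases l)
    case 0
    then show ?thesis using Suc by (simp add: e)
  next
    case (Suc m)
    show ?thesis
    proof (cases "m < n")
      case True
      then have "n - m = Suc (n - Suc m)" by simp
      then show ?thesis using Suc \<open>l = Suc m\<close>
        by (simp add: e Suc.hyps algebra_simps)
    next
      case False
      then show ?thesis using Suc \<open>l = Suc m\<close>
        by (cases "m = n") (auto simp add: e Suc.hyps algebra_simps binomial_eq_0)
    qed
  qed
qed

lemma TT_as_sum: "TT f = (\<Sum>n\<le>degree f. [:[:coeff f n:]:] * [:[:0,1:],1:] ^ n)"
proof -
  have "TT f = TT (\<Sum>n\<le>degree f. monom (coeff f n) n)" by (simp add: poly_as_sum_of_monoms)
  also have "\<dots> = (\<Sum>n\<le>degree f. TT (monom (coeff f n) n))" by (simp add: TT_sum)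
  also have "\<dots> = (\<Sum>n\<le>degree f. [:[:coeff f n:]:] * [:[:0,1:],1:] ^ n)"
  proof (rule sum.cong)
    fix n
    have "monom (coeff f n) n = Polynomial.smult (coeff f n) ([:0,1:] ^ n)" by (simp add: monom_altdef)
    then show "TT (monom (coeff f n) n) = [:[:coeff f n:]:] * [:[:0,1:],1:] ^ n"
      by (simp add: TT_smult TT_power TT_X)
  qed simp
  finally show ?thesis .
qed

lemma coeff_hasse: "coeff (hasse_deriv l f) m = of_nat ((m + l) choose l) * coeff f (m + l)"
proof -
  have "hasse_deriv l f = (\<Sum>n\<le>degree f. [:coeff f n:] * coeff ([:[:0,1:],1:] ^ n) l)"
    by (simp add: hasse_TT TT_as_sum coeff_sum)
  also have "\<dots> = (\<Sum>n\<le>degree f. monom (coeff f n * of_nat (n choose l)) (n - l))"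
    by (simp add: coeff_lin_power of_nat_poly monom_altdef mult.commute)
  finally have "coeff (hasse_deriv l f) m = (\<Sum>n\<le>degree f. coeff (monom (coeff f n * of_nat (n choose l)) (n - l)) m)"
    by (simp add: coeff_sum)
  also have "\<dots> = (\<Sum>n\<le>degree f. (if n = m + l then coeff f n * of_nat (n choose l) else 0))"
  proof (rule sum.cong)
    fix n
    show "coeff (monom (coeff f n * of_nat (n choose l)) (n - l)) m = (if n = m + l then coeff f n * of_nat (n choose l) else 0)"
      by (cases "l \<le> n") (auto simp: coeff_monom binomial_eq_0)
  qed simp
  also have "\<dots> = of_nat ((m + l) choose l) * coeff f (m + l)"
    by (auto simp: coeff_eq_0 not_le)
  finally show ?thesis .
qed



lemma hasse_0_id[simp]: "hasse_deriv 0 f = f"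
  by (rule poly_eqI) (simp add: coeff_hasse)

lemma hasse_smult: "hasse_deriv l (Polynomial.smult c f) = Polynomial.smult c (hasse_deriv l f)"
  by (rule poly_eqI) (simp add: coeff_hasse ac_simps)

lemma hasse_of_nat_mult: "hasse_deriv l (of_nat n * f) = of_nat n * hasse_deriv l f"
  by (rule poly_eqI) (simp add: coeff_hasse of_nat_poly ac_simps)

lemma hasse_eq_0: "degree f < l \<Longrightarrow> hasse_deriv l f = 0"
  by (rule poly_eqI) (simp add: coeff_hasse coeff_eq_0)

lemma degree_hasse_le: "degree (hasse_deriv l f) \<le> degree f - l"
  by (rule degree_le) (simp add: coeff_hasse coeff_eq_0)

lemma hasse_nonzero_le: "hasse_deriv l f \<noteq> 0 \<Longrightarrow> l \<le> degree f"
  using hasse_eq_0 not_le by blast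

definition lowdeg :: "nat \<Rightarrow> 'a::zero poly \<Rightarrow> bool" where
  "lowdeg n p \<longleftrightarrow> (\<forall>m\<ge>n. coeff p m = 0)"

lemma lowdeg_hasse: "lowdeg n p \<Longrightarrow> lowdeg n (hasse_deriv l p)"
  by (simp add: lowdeg_def coeff_hasse)
lemma lowdeg_add: "lowdeg n p \<Longrightarrow> lowdeg n q \<Longrightarrow> lowdeg n (p + q)"
  by (simp add: lowdeg_def)
lemma lowdeg_diff: "lowdeg n p \<Longrightarrow> lowdeg n q \<Longrightarrow> lowdeg n (p - (q::'a::ab_group_add poly))"
  by (simp add: lowdeg_def)
lemma lowdeg_uminus: "lowdeg n p \<Longrightarrow> lowdeg n (- (p::'a::ab_group_add poly))"
  by (simp add: lowdeg_def)
lemma lowdeg_0[simp]: "lowdeg n 0"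
  by (simp add: lowdeg_def)
lemma lowdeg_sum: "(\<And>i. i \<in> A \<Longrightarrow> lowdeg n (f i)) \<Longrightarrow> lowdeg n (sum f A)"
  by (induct A rule: infinite_finite_induct) (auto simp: lowdeg_add)
lemma lowdeg_mono: "lowdeg n p \<Longrightarrow> n \<le> m \<Longrightarrow> lowdeg m p"
  by (simp add: lowdeg_def)
lemma lowdeg_const_mult: "lowdeg n p \<Longrightarrow> lowdeg n ([:c:] * p)"
  by (simp add: lowdeg_def)
lemma lowdeg_smult: "lowdeg n p \<Longrightarrow> lowdeg n (Polynomial.smult c p)"
  by (simp add: lowdeg_def)
lemma lowdeg_monom_mult: "lowdeg n p \<Longrightarrow> lowdeg (n + m) (monom c m * p)"
  by (simp add: lowdeg_def coeff_monom_mult)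
lemma lowdeg_degree: "lowdeg n p \<Longrightarrow> p \<noteq> 0 \<Longrightarrow> degree p < n"
  unfolding lowdeg_def by (metis leading_coeff_0_iff not_le)
lemma lowdeg_degree': "lowdeg n p \<Longrightarrow> 0 < n \<Longrightarrow> degree p \<le> n - 1"
  using lowdeg_degree[of n p] by (cases "p = 0") auto
lemma degree_lowdeg: "degree p < n \<Longrightarrow> lowdeg n p"
  unfolding lowdeg_def by (simp add: coeff_eq_0)

lemma coeff_of_nat_mult: "coeff (of_nat n * p) m = of_nat n * coeff p m"
  by (simp add: of_nat_poly)

lemma pderiv_hasse: "pderiv (hasse_deriv l f) = of_nat (Suc l) * hasse_deriv (Suc l) f"
proof (rule poly_eqI)
  fix m
  have e: "Suc m * (Suc (l + m) choose l) = Suc l * (Suc (l + m) choose Suc l)"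
    using Suc_times_binomial_add[of l m] by simp
  have "coeff (pderiv (hasse_deriv l f)) m = of_nat (Suc m) * (of_nat (Suc (l + m) choose l) * coeff f (Suc (l + m)))"
    by (simp only: coeff_pderiv coeff_hasse) (simp add: ac_simps)
  also have "\<dots> = of_nat (Suc m * (Suc (l + m) choose l)) * coeff f (Suc (l + m))"
    by (simp only: of_nat_mult mult.assoc)
  also have "\<dots> = of_nat (Suc l * (Suc (l + m) choose Suc l)) * coeff f (Suc (l + m))"
    by (simp only: e)
  also have "\<dots> = of_nat (Suc l) * (of_nat (Suc (l + m) choose Suc l) * coeff f (Suc (l + m)))"
    by (simp only: of_nat_mult mult.assoc)
  also have "\<dots> = coeff (of_nat (Suc l) * hasse_deriv (Suc l) f) m"
    by (simp only: coeff_of_nat_mult coeff_hasse) (simp add: ac_simps)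
  finally show "coeff (pderiv (hasse_deriv l f)) m = coeff (of_nat (Suc l) * hasse_deriv (Suc l) f) m" .
qed

lemma hasse_linear_power:
  "hasse_deriv l ([:a,1:] ^ n) = of_nat (n choose l) * [:a,1:] ^ (n - l)"
  by (simp add: hasse_TT TT_power TT_linear coeff_lin_power)

lemma hasse_dvd:
  assumes "[:a,1:] ^ n dvd f"
  shows "[:a,1:] ^ (n - l) dvd hasse_deriv l f"
proof -
  obtain g where f: "f = [:a,1:] ^ n * g" using assms by (auto elim: dvdE)
  have "hasse_deriv l f = (\<Sum>b\<le>l. of_nat (n choose b) * [:a,1:] ^ (n - b) * hasse_deriv (l - b) g)"
    by (simp add: f hasse_leibniz hasse_linear_power)
  also have "[:a,1:] ^ (n - l) dvd \<dots>"
  proof (rule dvd_sum)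
    fix b assume "b \<in> {..l}"
    then have "[:a,1:] ^ (n - l) dvd [:a,1:] ^ (n - b)" by (intro le_imp_power_dvd) auto
    then show "[:a,1:] ^ (n - l) dvd of_nat (n choose b) * [:a,1:] ^ (n - b) * hasse_deriv (l - b) g"
      by (metis dvd_mult dvd_mult2)
  qed
  finally show ?thesis .
qed


lemma char_finite_field:
  assumes "prime q" and "card (UNIV :: 'a::{field,finite} set) = q"
  shows "CHAR('a) = q"
proof -
  have "(\<Sum>x\<in>(UNIV::'a set). x + 1) = (\<Sum>x\<in>UNIV. x)"
    by (rule sum.reindex_bij_witness[where i="\<lambda>x. x - 1" and j="\<lambda>x. x + 1"]) auto
  then have "of_nat q = (0::'a)"
    using assms(2) by (simp add: sum.distrib)
  then have "CHAR('a) dvd q" by (simp add: of_nat_eq_0_iff_char_dvd)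
  with assms(1) show ?thesis
    by (metis CHAR_not_1' One_nat_def prime_nat_iff)
qed


lemma fermat_finite_field:
  assumes "card (UNIV :: 'a::{field,finite} set) = q"
  shows "(x::'a) ^ q = x"
proof (cases "x = 0")
  case True
  have "q \<noteq> 0" using assms by (metis card_0_eq finite_UNIV UNIV_not_empty)
  then show ?thesis using True by simp
next
  case False
  let ?U = "UNIV - {0::'a}"
  have bij: "bij_betw (\<lambda>y. x * y) ?U ?U"
  proof (rule bij_betw_byWitness[where f'="\<lambda>y. y / x"])
  qed (use False in auto)
  have "(\<Prod>y\<in>?U. x * y) = (\<Prod>y\<in>?U. y)"
    using prod.reindex_bij_betw[OF bij, of "\<lambda>y. y"] by simp
  moreover have "(\<Prod>y\<in>?U. x * y) = x ^ card ?U * (\<Prod>y\<in>?U. y)"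
    by (simp add: prod.distrib)
  ultimately have "x ^ card ?U * (\<Prod>y\<in>?U. y) = 1 * (\<Prod>y\<in>?U. y)" by simp
  moreover have "(\<Prod>y\<in>?U. y) \<noteq> 0" by simp
  ultimately have "x ^ card ?U = 1" by (metis mult_right_cancel)
  moreover have "card ?U = q - 1" using assms by (simp add: card_Diff_singleton)
  moreover have "q \<noteq> 0" using assms by (metis card_0_eq finite_UNIV UNIV_not_empty)
  ultimately have "x ^ (q - 1) = 1" by simp
  then have "x ^ (Suc (q - 1)) = x" by (simp del: power_Suc add: power_Suc2)
  with \<open>q \<noteq> 0\<close> show ?thesis by simp
qed

lemma prime_dvd_choose_mult:
  assumes "prime q" "0 < a" "a < q" "q dvd m"
  shows "q dvd (m choose a)"
proof -
  have "a * (m choose a) = m * ((m - 1) choose (a - 1))"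
    using times_binomial_minus1_eq[OF assms(2)] .
  then have "q dvd a * (m choose a)" using assms(4) by simp
  moreover have "\<not> q dvd a" using assms(2,3) by (simp add: nat_dvd_not_less)
  ultimately show ?thesis using assms(1) prime_dvd_mult_iff by blast
qed

context
  fixes q :: nat
  assumes qprime: "prime q" and qchar: "CHAR('a::field) = q"
begin

lemma of_nat_eq_0_q: "of_nat n = (0::'a) \<longleftrightarrow> q dvd n"
  using of_nat_eq_0_iff_char_dvd qchar by metis

lemma zd_coeff:
  assumes "pderiv (g::'a poly) = 0" and "coeff g n \<noteq> 0"
  shows "q dvd n"
proof (cases n)
  case (Suc m)
  have "coeff (pderiv g) m = of_nat (Suc m) * coeff g (Suc m)" by (rule coeff_pderiv)
  with assms Suc have "of_nat (Suc m) = (0::'a)" by simp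
  with Suc show ?thesis using of_nat_eq_0_q by blast
qed simp

lemma hasse_zd:
  assumes "pderiv (g::'a poly) = 0" "0 < a" "a < q"
  shows "hasse_deriv a g = 0"
proof (rule poly_eqI)
  fix m
  show "coeff (hasse_deriv a g) m = coeff 0 m"
  proof (cases "coeff g (m + a) = 0")
    case False
    then have "q dvd (m + a)" using zd_coeff assms(1) by blast
    then have "q dvd ((m + a) choose a)" using prime_dvd_choose_mult qprime assms by blast
    then show ?thesis by (simp add: coeff_hasse of_nat_eq_0_q)
  qed (simp add: coeff_hasse)
qed

lemma hasse_zd_mult:
  assumes "pderiv (g::'a poly) = 0" "l < q"
  shows "hasse_deriv l (g * f) = g * hasse_deriv l f"
proof -
  have "hasse_deriv l (g * f) = (\<Sum>a\<le>l. hasse_deriv a g * hasse_deriv (l - a) f)"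
    by (rule hasse_leibniz)
  also have "\<dots> = (\<Sum>a\<le>l. if a = 0 then g * hasse_deriv l f else 0)"
    by (rule sum.cong) (use assms hasse_zd in auto)
  also have "\<dots> = g * hasse_deriv l f" by simp
  finally show ?thesis .
qed

lemma zd_power: "pderiv ((p::'a poly) ^ q) = 0"
  by (simp add: pderiv_power of_nat_eq_0_q)

lemma zd_mult: "pderiv (f::'a poly) = 0 \<Longrightarrow> pderiv g = 0 \<Longrightarrow> pderiv (f * g) = 0"
  by (simp add: pderiv_mult)
lemma zd_add: "pderiv (f::'a poly) = 0 \<Longrightarrow> pderiv g = 0 \<Longrightarrow> pderiv (f + g) = 0"
  by (simp add: pderiv_add)
lemma zd_uminus: "pderiv (f::'a poly) = 0 \<Longrightarrow> pderiv (- f) = 0"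
  by (simp add: pderiv_minus)
lemma zd_sum: "(\<And>i. i \<in> A \<Longrightarrow> pderiv (f i :: 'a poly) = 0) \<Longrightarrow> pderiv (sum f A) = 0"
  by (induct A rule: infinite_finite_induct) (auto simp: zd_add)

lemma zd_factor:
  assumes "pderiv (f::'a poly) = 0" "poly f a = 0"
  shows "\<exists>g. f = [:-a,1:] ^ q * g \<and> pderiv g = 0"
proof (cases "f = 0")
  case True
  then show ?thesis by (intro exI[of _ 0]) simp
next
  case False
  define m where "m = order a f"
  obtain h where fh: "f = [:-a,1:] ^ m * h" and nd: "\<not> [:-a,1:] dvd h"
    using order_decomp[OF False] m_def by blast
  have "m \<noteq> 0" using assms(2) False order_root m_def by blast
  then obtain m' where m': "m = Suc m'" by (cases m) auto
  have d1: "pderiv [:-a,1:] = 1" by (simp add: pderiv_pCons)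
  have gen: "\<And>x u v K n. (x::'a poly) ^ Suc n * u + v * (K * x ^ n * 1) = x ^ n * (K * v + x * u)"
    by (simp add: algebra_simps)
  have "pderiv f = [:-a,1:] ^ Suc m' * pderiv h + h * (Polynomial.smult (of_nat (Suc m')) ([:-a,1:] ^ m') * 1)"
    unfolding fh m' pderiv_mult pderiv_power_Suc d1 ..
  also have "\<dots> = [:-a,1:] ^ Suc m' * pderiv h + h * ([:of_nat (Suc m'):] * [:-a,1:] ^ m' * 1)"
    by (simp only: smult_conv_map_poly) (simp add: smult_conv_map_poly[symmetric])
  also have "\<dots> = [:-a,1:] ^ m' * ([:of_nat (Suc m'):] * h + [:-a,1:] * pderiv h)"
    by (rule gen)
  also have "\<dots> = [:-a,1:] ^ m' * (Polynomial.smult (of_nat m) h + [:-a,1:] * pderiv h)"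
    by (simp add: m')
  finally have "pderiv f = [:-a,1:] ^ m' * (Polynomial.smult (of_nat m) h + [:-a,1:] * pderiv h)" .
  with assms(1) have e: "Polynomial.smult (of_nat m) h + [:-a,1:] * pderiv h = 0"
    by simp
  have "poly (Polynomial.smult (of_nat m) h + [:-a,1:] * pderiv h) a = of_nat m * poly h a"
    by (simp only: poly_add poly_smult poly_mult) simp
  then have "of_nat m * poly h a = 0"
    by (metis e poly_0)
  moreover have "poly h a \<noteq> 0" using nd by (simp add: poly_eq_0_iff_dvd)
  ultimately have m0: "of_nat m = (0::'a)" by simp
  then have "q dvd m" using of_nat_eq_0_q by blast
  with \<open>m \<noteq> 0\<close> have qm: "q \<le> m" by (simp add: dvd_imp_le)
  from e m0 have "[:-a,1:] * pderiv h = 0" by (metis smult_0_left add_0)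
  then have "pderiv h = 0" by (metis mult_eq_0_iff pCons_eq_0_iff one_neq_zero)
  define g where "g = [:-a,1:] ^ (m - q) * h"
  have "f = [:-a,1:] ^ q * g" using qm by (simp add: fh g_def flip: power_add)
  moreover have "pderiv g = 0"
  proof -
    have "of_nat (m - q) = (0::'a)" using \<open>q dvd m\<close> of_nat_eq_0_q by (simp add: dvd_diff_nat)
    then show ?thesis
      by (simp add: g_def pderiv_mult pderiv_power \<open>pderiv h = 0\<close>)
  qed
  ultimately show ?thesis by blast
qed

end


lemma Lam_eq: "Lam q = monom 1 q - [:0,1:]" by (simp add: Lam_def)

lemma degree_Lam: "2 \<le> q \<Longrightarrow> degree (Lam q :: 'a::comm_ring_1 poly) = q"
proof -
  assume q: "2 \<le> q"
  have "degree ([:0,1:] :: 'a poly) < degree (monom (1::'a) q)" using q by (simp add: degree_monom_eq)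
  then have "degree (monom (1::'a) q + - [:0,1:]) = q"
    by (subst degree_add_eq_left) (auto simp: degree_monom_eq)
  then show ?thesis unfolding Lam_def diff_conv_add_uminus .
qed

lemma Lam_nonzero: "2 \<le> q \<Longrightarrow> Lam q \<noteq> (0 :: 'a::comm_ring_1 poly)"
  using degree_Lam[of q] by (metis degree_0 not_numeral_le_zero)

lemma poly_Lam: "poly (Lam q) x = x ^ q - x"
  by (simp add: Lam_def poly_monom)

lemma coeff_monom_mult_low: "a < n \<Longrightarrow> coeff (monom c n * p) a = 0"
  by (simp add: coeff_monom_mult)

lemma power_add_split: "\<exists>R. (u + w) ^ j = u ^ j + w * (R :: 'b::comm_ring_1)"
proof (induct j)
  case 0 then show ?case by (intro exI[of _ 0]) simp
next
  case (Suc j)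
  then obtain R where R: "(u + w) ^ j = u ^ j + w * R" by blast
  have "(u + w) ^ Suc j = u ^ Suc j + w * (u ^ j + R * (u + w))"
    by (simp add: R algebra_simps)
  then show ?case by blast
qed

context
  fixes q :: nat
  assumes qprime: "prime q" and qchar: "CHAR('a::field) = q"
begin

lemma q_ge2: "2 \<le> q" using qprime prime_ge_2_nat by blast

lemma TT_monom_q: "TT (monom (1::'a) q) = [:monom 1 q:] + monom 1 q"
proof -
  have pc: "prime CHAR('a poly poly)" using qprime qchar by simp
  have cq: "q = CHAR('a poly poly)" using qchar by simp
  have "TT (monom (1::'a) q) = TT ([:0,1:] ^ q)" by (simp add: monom_altdef)
  also have "\<dots> = [:[:0,1:],1:] ^ q" by (simp add: TT_power TT_X)
  also have "[:[:0,1:],1:] = [:[:0,1:]:] + ([:0, 1:] :: 'a poly poly)" by simp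
  also have "([:[:0,1:]:] + [:0, 1:]) ^ q = [:[:0,1:]:] ^ q + ([:0, 1:] :: 'a poly poly) ^ q"
    by (rule freshmans_dream[OF pc cq])
  also have "\<dots> = [:monom 1 q:] + monom 1 q"
    by (simp add: poly_const_pow monom_altdef)
  finally show ?thesis .
qed

lemma TT_Lam: "TT (Lam q :: 'a poly) = [:Lam q, -1:] + monom 1 q"
proof -
  have "TT (Lam q :: 'a poly) = [:monom 1 q:] + monom 1 q - [:[:0,1:],1:]"
    by (simp add: Lam_def TT_diff TT_monom_q TT_X)
  also have "\<dots> = [:Lam q, -1:] + monom 1 q"
    by (simp add: Lam_def)
  finally show ?thesis .
qed

lemma hasse_Lam_power:
  assumes "a < q"
  shows "hasse_deriv a (Lam q ^ j :: 'a poly) = of_nat (j choose a) * (-1) ^ a * Lam q ^ (j - a)"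
proof -
  obtain R where R: "([:Lam q, -1:] + monom 1 q) ^ j = [:Lam q :: 'a poly, -1:] ^ j + monom 1 q * R"
    using power_add_split by blast
  have "hasse_deriv a (Lam q ^ j :: 'a poly) = coeff ([:Lam q, -1:] ^ j) a + coeff (monom 1 q * R) a"
    by (simp add: hasse_TT TT_power TT_Lam R)
  also have "coeff (monom 1 q * R) a = 0" using assms by (rule coeff_monom_mult_low)
  finally show ?thesis by (simp add: coeff_lin_power ac_simps)
qed

lemma hasse_Lam_mult_dvd:
  assumes "l < q"
  shows "Lam q dvd (hasse_deriv l (Lam q ^ j * B) - (if j \<le> l then (-1) ^ j * hasse_deriv (l - j) B else (0 :: 'a poly)))"
proof -
  define F where "F a = of_nat (j choose a) * (-1) ^ a * Lam q ^ (j - a) * hasse_deriv (l - a) B" for a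
  define G where "G a = (if a = j then 0 else F a)" for a
  have "hasse_deriv l (Lam q ^ j * B) = (\<Sum>a\<le>l. F a)"
    unfolding hasse_leibniz F_def
    by (rule sum.cong) (use assms in \<open>auto simp: hasse_Lam_power\<close>)
  also have "\<dots> = (\<Sum>a\<le>l. G a + (if a = j then F j else 0))"
    by (rule sum.cong) (auto simp: G_def)
  also have "\<dots> = (\<Sum>a\<le>l. G a) + (if j \<le> l then F j else 0)"
    by (simp add: sum.distrib)
  also have "F j = (-1) ^ j * hasse_deriv (l - j) B" by (simp add: F_def)
  finally have e: "hasse_deriv l (Lam q ^ j * B) - (if j \<le> l then (-1) ^ j * hasse_deriv (l - j) B else 0) = (\<Sum>a\<le>l. G a)"
    by simp
  have "Lam q dvd (\<Sum>a\<le>l. G a)"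
  proof (rule dvd_sum)
    fix a assume "a \<in> {..l}"
    show "Lam q dvd G a"
    proof (cases "a < j")
      case True
      then have "Lam q dvd Lam q ^ (j - a)" by (simp add: dvd_power)
      then show ?thesis using True by (simp add: G_def F_def)
    next
      case False
      then show ?thesis by (cases "a = j") (auto simp: G_def F_def binomial_eq_0)
    qed
  qed
  then show ?thesis using e by simp
qed

end

lemma Lam_adic:
  "A = (\<Sum>j<n. ((A div L ^ j) mod L) * L ^ j) + (A div L ^ n) * L ^ n" for A L :: "'a::field poly"
proof (induct n)
  case 0 then show ?case by simp
next
  case (Suc n)
  have d: "A div L ^ Suc n = A div L ^ n div L" by (simp only: power_Suc2 poly_div_mult_right)
  have H: "A div L ^ n div L * L + A div L ^ n mod L = A div L ^ n" by (rule div_mult_mod_eq)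
  have E: "A div L ^ n = (A div L ^ n) mod L + (A div L ^ Suc n) * L"
    apply (subst add.commute) apply (unfold d) apply (rule H[symmetric]) done
  have "(A div L ^ n) * L ^ n = ((A div L ^ n) mod L + (A div L ^ Suc n) * L) * L ^ n"
    using E by (rule arg_cong)
  then have "(A div L ^ n) * L ^ n = ((A div L ^ n) mod L) * L ^ n + (A div L ^ Suc n) * L ^ Suc n"
    by (simp add: algebra_simps)
  then show ?case using Suc by (simp add: add.assoc)
qed


lemma coeff_neg1_power_mult: "coeff ((- 1) ^ j * p) m = (- 1) ^ j * coeff (p :: 'a::comm_ring_1 poly) m"
  by (induct j) (auto simp: algebra_simps)

lemma lowdeg_neg1_power: "lowdeg n p \<Longrightarrow> lowdeg n ((- 1) ^ j * (p :: 'a::comm_ring_1 poly))"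
  by (simp add: lowdeg_def coeff_neg1_power_mult)

lemma poly_mod_root: "poly L a = 0 \<Longrightarrow> poly (x mod L) a = poly (x :: 'a::field poly) a"
proof -
  assume "poly L a = 0"
  moreover have "x = x div L * L + x mod L" by simp
  ultimately show ?thesis by (metis add.left_neutral mult_zero_right poly_add poly_mult)
qed

locale fsetup =
  fixes A :: "'a::{field,finite} poly" and q c :: nat
  assumes qprime: "prime q" and card_q: "card (UNIV :: 'a set) = q"
    and c_pos: "0 < c" and c_q: "c < q"
    and A_nz: "A \<noteq> 0" and degA: "degree A < c * q"
begin

lemma qchar: "CHAR('a) = q" using char_finite_field[OF qprime card_q] .
lemma q2: "2 \<le> q" using qprime prime_ge_2_nat by blast

abbreviation L where "L \<equiv> (Lam q :: 'a poly)"

definition B :: "nat \<Rightarrow> 'a poly" where "B j = (A div L ^ j) mod L"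

lemma L_nz: "L \<noteq> 0" using Lam_nonzero[OF q2] .
lemma deg_L: "degree L = q" using degree_Lam[OF q2] .

lemma A_expand: "A = (\<Sum>j<c. B j * L ^ j)"
proof -
  have "degree A < degree (L ^ c)" using degA by (simp add: degree_power_eq L_nz deg_L mult.commute)
  then have "A div L ^ c = 0" by (rule div_poly_less)
  then show ?thesis using Lam_adic[where A=A and n=c and L=L] by (simp add: B_def)
qed

lemma B_low: "lowdeg q (B j)"
proof -
  have "B j = 0 \<or> degree (B j) < q" unfolding B_def using degree_mod_less[OF L_nz] deg_L by metis
  then show ?thesis using degree_lowdeg by fastforce
qed

definition Y :: "nat \<Rightarrow> 'a poly" where
  "Y l = (\<Sum>j<c. if j \<le> l then (- 1) ^ j * hasse_deriv (l - j) (B j) else 0)"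

lemma Y_low: "lowdeg q (Y l)"
  unfolding Y_def by (intro lowdeg_sum) (auto intro: lowdeg_neg1_power lowdeg_hasse B_low)

lemma pseudo_Y: assumes "l < q" shows "pseudo_deriv q l A = Y l"
proof -
  have "hasse_deriv l A = (\<Sum>j<c. hasse_deriv l (L ^ j * B j))"
    by (subst A_expand) (simp add: hasse_sum mult.commute)
  then have "hasse_deriv l A - Y l = (\<Sum>j<c. hasse_deriv l (L ^ j * B j) - (if j \<le> l then (- 1) ^ j * hasse_deriv (l - j) (B j) else 0))"
    by (simp add: Y_def sum_subtractf)
  also have "L dvd \<dots>"
    by (intro dvd_sum hasse_Lam_mult_dvd[OF qprime qchar assms])
  finally have "hasse_deriv l A mod L = Y l mod L" by (simp add: mod_eq_dvd_iff)
  also have "Y l mod L = Y l"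
  proof (cases "Y l = 0")
    case False
    then have "degree (Y l) < degree L" using lowdeg_degree[OF Y_low] deg_L by simp
    then show ?thesis by (rule mod_poly_less)
  qed simp
  finally show ?thesis by (simp add: pseudo_deriv_def)
qed

lemma pseudo_le_pdeg: "degree (pseudo_deriv q l A) \<le> pdeg q A"
proof -
  have "range (\<lambda>l. degree (pseudo_deriv q l A)) \<subseteq> {..<q}"
  proof
    fix x assume "x \<in> range (\<lambda>l. degree (pseudo_deriv q l A))"
    then obtain l where x: "x = degree (pseudo_deriv q l A)" by blast
    have "hasse_deriv l A mod L = 0 \<or> degree (hasse_deriv l A mod L) < degree L"
      using degree_mod_less[OF L_nz] by blast
    then show "x \<in> {..<q}" using x q2 deg_L by (auto simp: pseudo_deriv_def)
  qed
  then have "finite (range (\<lambda>l. degree (pseudo_deriv q l A)))" using finite_subset by blast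
  then show ?thesis unfolding pdeg_def by (intro Max_ge) auto
qed

lemma Y_split:
  assumes "j < c"
  shows "Y j = (- 1) ^ j * B j + (\<Sum>i<j. (- 1) ^ i * hasse_deriv (j - i) (B i))"
proof -
  have "Y j = (\<Sum>i\<in>{i\<in>{..<c}. i \<le> j}. (- 1) ^ i * hasse_deriv (j - i) (B i))"
    unfolding Y_def by (rule sum.inter_filter[symmetric]) simp
  also have "{i\<in>{..<c}. i \<le> j} = {..<Suc j}" using assms by auto
  finally show ?thesis by (simp add: add.commute)
qed

lemma B_lowk:
  assumes "pdeg q A < k" and "j < c"
  shows "lowdeg k (B j)"
  using assms(2)
proof (induct j rule: less_induct)
  case (less j)
  have "degree (Y j) < k"
    using pseudo_le_pdeg[of j] pseudo_Y[of j] less.prems c_q assms(1) by simp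
  then have Yk: "lowdeg k (Y j)" by (rule degree_lowdeg)
  have S: "lowdeg k (\<Sum>i<j. (- 1) ^ i * hasse_deriv (j - i) (B i))"
    using less.hyps less.prems by (intro lowdeg_sum lowdeg_neg1_power lowdeg_hasse) auto
  have "(- 1) ^ j * B j = Y j - (\<Sum>i<j. (- 1) ^ i * hasse_deriv (j - i) (B i))"
    using Y_split[OF less.prems] by simp
  then have "lowdeg k ((- 1) ^ j * B j)" using Yk S by (simp add: lowdeg_diff)
  then have "lowdeg k ((- 1) ^ j * ((- 1) ^ j * B j))" by (rule lowdeg_neg1_power)
  then show ?case by (simp flip: mult.assoc power_mult_distrib)
qed

lemma easy_bound:
  assumes "pdeg q A < k" and "c < M"
  shows "card {a. M \<le> order a A} < k"
proof -
  have "\<exists>j<c. B j \<noteq> 0"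
  proof (rule ccontr)
    assume "\<not> ?thesis"
    then have "A = 0" by (subst A_expand) simp
    with A_nz show False by simp
  qed
  then obtain j0 where j0: "j0 < c" "B j0 \<noteq> 0" "\<forall>i<j0. B i = 0"
    using exists_least_iff[of "\<lambda>j. j < c \<and> B j \<noteq> 0"] by (metis less_trans)
  have Yj0: "Y j0 = (- 1) ^ j0 * B j0"
    using Y_split[OF j0(1)] j0(3) by simp
  have Ynz: "Y j0 \<noteq> 0" using Yj0 j0(2) by simp
  have "{a. M \<le> order a A} \<subseteq> {x. poly (Y j0) x = 0}"
  proof
    fix a assume "a \<in> {a. M \<le> order a A}"
    then have "[:-a,1:] ^ M dvd A" by (simp add: order_divides)
    then have d: "[:-a,1:] ^ (M - j0) dvd hasse_deriv j0 A" by (rule hasse_dvd)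
    have "[:-a,1:] dvd [:-a,1:] ^ (M - j0)" using j0(1) assms(2) by (simp add: dvd_power)
    with d have "poly (hasse_deriv j0 A) a = 0" by (meson dvd_trans poly_eq_0_iff_dvd)
    moreover have "poly L a = 0" by (simp add: poly_Lam fermat_finite_field[OF card_q])
    ultimately have "poly (pseudo_deriv q j0 A) a = 0" by (simp add: pseudo_deriv_def poly_mod_root)
    then show "a \<in> {x. poly (Y j0) x = 0}" using pseudo_Y[of j0] j0(1) c_q by simp
  qed
  then have "card {a. M \<le> order a A} \<le> card {x. poly (Y j0) x = 0}" by (intro card_mono) auto
  also have "\<dots> \<le> degree (Y j0)" using Ynz by (rule card_poly_roots_bound)
  also have "\<dots> < k" using pseudo_le_pdeg[of j0] pseudo_Y[of j0] j0(1) c_q assms(1) by simp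
  finally show ?thesis .
qed

end


lemma lowdeg_of_nat_mult: "lowdeg n p \<Longrightarrow> lowdeg n (of_nat m * p)"
  by (simp add: lowdeg_def coeff_of_nat_mult)

context fsetup
begin

abbreviation TQ where "TQ \<equiv> (monom 1 q :: 'a poly)"

definition P :: "nat \<Rightarrow> 'a poly" where
  "P i = (\<Sum>b<c. of_nat (b choose i) * (- [:0,1:]) ^ (b - i) * B b)"

lemma L_binom: "b < c \<Longrightarrow> L ^ b = (\<Sum>i<c. of_nat (b choose i) * TQ ^ i * (- [:0,1:]) ^ (b - i))"
proof -
  assume b: "b < c"
  have "L = TQ + (- [:0,1:])" by (simp add: Lam_def)
  then have "L ^ b = (\<Sum>i\<le>b. of_nat (b choose i) * TQ ^ i * (- [:0,1:]) ^ (b - i))"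
    by (simp add: binomial_ring)
  also have "\<dots> = (\<Sum>i<c. of_nat (b choose i) * TQ ^ i * (- [:0,1:]) ^ (b - i))"
    by (rule sum.mono_neutral_left) (use b in \<open>auto simp: binomial_eq_0\<close>)
  finally show ?thesis .
qed

lemma A_P: "A = (\<Sum>i<c. TQ ^ i * P i)"
proof -
  have "A = (\<Sum>b<c. B b * (\<Sum>i<c. of_nat (b choose i) * TQ ^ i * (- [:0,1:]) ^ (b - i)))"
    by (subst A_expand) (intro sum.cong refl, simp add: L_binom)
  also have "\<dots> = (\<Sum>b<c. \<Sum>i<c. TQ ^ i * (of_nat (b choose i) * (- [:0,1:]) ^ (b - i) * B b))"
    by (simp add: sum_distrib_left ac_simps)
  also have "\<dots> = (\<Sum>i<c. \<Sum>b<c. TQ ^ i * (of_nat (b choose i) * (- [:0,1:]) ^ (b - i) * B b))"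
    by (rule sum.swap)
  also have "\<dots> = (\<Sum>i<c. TQ ^ i * P i)"
    by (simp add: P_def sum_distrib_left)
  finally show ?thesis .
qed

lemma P_low:
  assumes "pdeg q A < k" and "i < c"
  shows "lowdeg (k + c - 1 - i) (P i)"
  unfolding P_def
proof (intro lowdeg_sum)
  fix b assume b: "b \<in> {..<c}"
  show "lowdeg (k + c - 1 - i) (of_nat (b choose i) * (- [:0,1:]) ^ (b - i) * B b)"
  proof (cases "i \<le> b")
    case False
    then show ?thesis by (simp add: binomial_eq_0)
  next
    case True
    have xm: "[:0,1:] ^ (b - i) = (monom 1 (b - i) :: 'a poly)" by (simp add: monom_altdef)
    have "(- [:0,1:]) ^ (b - i) * B b = (- 1) ^ (b - i) * (monom 1 (b - i) * B b)"
      by (simp only: power_minus[of "[:0,1:]::'a poly"] xm mult.assoc)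
    moreover have "lowdeg (k + (b - i)) (monom 1 (b - i) * B b)"
      using B_lowk[OF assms(1)] b by (intro lowdeg_monom_mult) auto
    ultimately have "lowdeg (k + (b - i)) ((- [:0,1:]) ^ (b - i) * B b)"
      by (metis lowdeg_neg1_power)
    then have "lowdeg (k + c - 1 - i) ((- [:0,1:]) ^ (b - i) * B b)"
      by (rule lowdeg_mono) (use b True in auto)
    then show ?thesis by (simp add: mult.assoc lowdeg_of_nat_mult)
  qed
qed

lemma zd_TQ_power: "pderiv (TQ ^ i) = 0"
proof -
  have "pderiv TQ = 0"
    by (simp add: pderiv_monom of_nat_eq_0_q[OF qprime qchar])
  then show ?thesis by (simp add: pderiv_power)
qed

end


definition WM :: "'a::comm_ring_1 poly list \<Rightarrow> 'a poly mat" where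
  "WM G = mat (length G) (length G) (\<lambda>(l,j). hasse_deriv l (G ! j))"
definition wr :: "'a::comm_ring_1 poly list \<Rightarrow> 'a poly" where
  "wr G = det (WM G)"

lemma WM_carrier: "WM G \<in> carrier_mat (length G) (length G)" by (simp add: WM_def)
lemma WM_index: "l < length G \<Longrightarrow> j < length G \<Longrightarrow> WM G $$ (l,j) = hasse_deriv l (G!j)"
  by (simp add: WM_def)

lemma wr_Nil: "wr [] = 1"
  by (simp add: wr_def WM_def det_def)

lemma WM_mult_vec:
  assumes "x \<in> carrier_vec (length G)"
  shows "WM G *\<^sub>v x = vec (length G) (\<lambda>l. \<Sum>j\<in>{0..<length G}. hasse_deriv l (G!j) * vec_index x j)"
  using assms by (intro eq_vecI) (auto simp: WM_def scalar_prod_def)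

lemma degree_signof_mult: "degree ((signof p :: 'a::comm_ring_1 poly) * x) \<le> degree x"
proof -
  have "degree ((signof p :: 'a poly) * x) \<le> degree (signof p :: 'a poly) + degree x" by (rule degree_mult_le)
  moreover have "degree (signof p :: 'a poly) = 0" by (simp add: of_int_poly)
  ultimately show ?thesis by simp
qed

lemma wr_degree:
  fixes G :: "'a::idom poly list"
  assumes nz: "wr G \<noteq> 0" and e: "\<And>j. j < length G \<Longrightarrow> degree (G!j) \<le> e j"
  shows "degree (wr G) + (\<Sum>l\<in>{0..<length G}. l) \<le> (\<Sum>j\<in>{0..<length G}. e j)"
proof -
  define n where "n = length G"
  define Pr where "Pr p = (\<Prod>i\<in>{0..<n}. WM G $$ (i, p i))" for p
  have det: "wr G = (\<Sum>p\<in>{p. p permutes {0..<n}}. signof p * Pr p)"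
    unfolding wr_def Pr_def n_def by (rule det_def'[OF WM_carrier])
  have key: "degree (Pr p) + (\<Sum>l\<in>{0..<n}. l) \<le> (\<Sum>j\<in>{0..<n}. e j)"
    if p: "p permutes {0..<n}" and pnz: "Pr p \<noteq> 0" for p
  proof -
    have pi: "\<And>i. i < n \<Longrightarrow> p i < n" using p permutes_in_image by fastforce
    have fnz: "\<And>i. i \<in> {0..<n} \<Longrightarrow> WM G $$ (i, p i) \<noteq> 0"
      using pnz unfolding Pr_def by auto
    have dP: "degree (Pr p) = (\<Sum>i\<in>{0..<n}. degree (WM G $$ (i, p i)))"
      unfolding Pr_def by (rule degree_prod_eq_sum_degree) (use fnz in auto)
    have b: "degree (WM G $$ (i, p i)) + i \<le> e (p i)" if i: "i \<in> {0..<n}" for i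
    proof -
      have pi': "p i < n" using pi i by auto
      have h: "WM G $$ (i, p i) = hasse_deriv i (G ! p i)" using i pi' by (simp add: WM_index n_def)
      have "hasse_deriv i (G ! p i) \<noteq> 0" using fnz[OF i] h by simp
      then have "i \<le> degree (G ! p i)" by (rule hasse_nonzero_le)
      moreover have "degree (hasse_deriv i (G ! p i)) \<le> degree (G ! p i) - i" by (rule degree_hasse_le)
      moreover have "degree (G ! p i) \<le> e (p i)" using e pi' n_def by simp
      ultimately show ?thesis unfolding h by linarith
    qed
    have "degree (Pr p) + (\<Sum>l\<in>{0..<n}. l) = (\<Sum>i\<in>{0..<n}. degree (WM G $$ (i, p i)) + i)"
      by (simp add: dP sum.distrib)
    also have "\<dots> \<le> (\<Sum>i\<in>{0..<n}. e (p i))" by (rule sum_mono) (rule b)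
    also have "\<dots> = (\<Sum>j\<in>{0..<n}. e j)"
      using sum.permute[OF p, of e] by (simp add: comp_def)
    finally show ?thesis .
  qed
  have "\<exists>p\<in>{p. p permutes {0..<n}}. signof p * Pr p \<noteq> 0"
  proof (rule ccontr)
    assume "\<not> ?thesis"
    then have "wr G = 0" unfolding det by (intro sum.neutral) auto
    with nz show False by simp
  qed
  then obtain p0 where p0: "p0 permutes {0..<n}" "Pr p0 \<noteq> 0" by auto
  have le: "(\<Sum>l\<in>{0..<n}. l) \<le> (\<Sum>j\<in>{0..<n}. e j)" using key[OF p0] by linarith
  have "degree (wr G) \<le> (\<Sum>j\<in>{0..<n}. e j) - (\<Sum>l\<in>{0..<n}. l)"
    unfolding det
  proof (rule degree_sum_le)
    show "finite {p. p permutes {0..<n}}" by (simp add: finite_permutations)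
  next
    fix p assume "p \<in> {p. p permutes {0..<n}}"
    then have p: "p permutes {0..<n}" by simp
    show "degree (signof p * Pr p) \<le> (\<Sum>j\<in>{0..<n}. e j) - (\<Sum>l\<in>{0..<n}. l)"
    proof (cases "Pr p = 0")
      case True then show ?thesis by simp
    next
      case False
      have "degree (signof p * Pr p) \<le> degree (Pr p)" by (rule degree_signof_mult)
      then show ?thesis using key[OF p False] by linarith
    qed
  qed
  then show ?thesis using le unfolding n_def by linarith
qed

lemma wr_cramer_dvd:
  fixes G :: "'a::comm_ring_1 poly list"
  assumes x: "x \<in> carrier_vec (length G)" and k: "k < length G"
    and h: "\<And>l. l < length G \<Longrightarrow> (\<Sum>j\<in>{0..<length G}. hasse_deriv l (G!j) * vec_index x j) = h l"
    and d: "\<And>l. l < length G \<Longrightarrow> D dvd h l"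
  shows "D dvd vec_index x k * wr G"
proof -
  define n where "n = length G"
  define A where "A = WM G"
  have A: "A \<in> carrier_mat n n" unfolding A_def n_def by (rule WM_carrier)
  have Ax: "A *\<^sub>v x = vec n h" unfolding A_def n_def using WM_mult_vec[OF x] h by (intro eq_vecI) auto
  have R: "replace_col A (A *\<^sub>v x) k \<in> carrier_mat n n" using A by (simp add: replace_col_def)
  have "vec_index x k * wr G = det (replace_col A (A *\<^sub>v x) k)"
    using cramer_lemma_mat[OF A _ k[folded n_def]] x by (simp add: wr_def A_def n_def)
  also have "\<dots> = (\<Sum>i<n. replace_col A (A *\<^sub>v x) k $$ (i,k) * cofactor (replace_col A (A *\<^sub>v x) k) i k)"
    by (rule laplace_expansion_column[OF R]) (use k n_def in simp)
  also have "D dvd \<dots>"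
  proof (rule dvd_sum)
    fix i assume i: "i \<in> {..<n}"
    have "replace_col A (A *\<^sub>v x) k $$ (i,k) = h i"
      using i k A Ax by (simp add: replace_col_def n_def)
    then show "D dvd replace_col A (A *\<^sub>v x) k $$ (i,k) * cofactor (replace_col A (A *\<^sub>v x) k) i k"
      using d[of i] i n_def by simp
  qed
  finally show ?thesis .
qed


lemma pderiv_sum: "pderiv (sum f A) = (\<Sum>i\<in>A. pderiv (f i))"
  by (induct A rule: infinite_finite_induct) (auto simp: pderiv_add)

context
  fixes q :: nat
  assumes qprime: "prime q" and qchar: "CHAR('a::field) = q"
begin

lemma wr_dependent:
  fixes G :: "'a poly list" and p :: "'a poly"
  assumes nz: "wr G \<noteq> 0" and z: "wr (G @ [p]) = 0"
  shows "\<exists>\<delta> \<nu>. \<delta> \<noteq> 0 \<and> pderiv \<delta> = 0 \<and> (\<forall>j<length G. pderiv (\<nu> j) = 0) \<and>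
            \<delta> * p = (\<Sum>j\<in>{0..<length G}. \<nu> j * G!j)"
proof -
  define n where "n = length G"
  define G' where "G' = G @ [p]"
  have lenG': "length G' = Suc n" by (simp add: G'_def n_def)
  have "det (WM G') = 0" using z by (simp add: wr_def G'_def)
  then obtain v where v: "v \<in> carrier_vec (Suc n)" "v \<noteq> 0\<^sub>v (Suc n)" "WM G' *\<^sub>v v = 0\<^sub>v (Suc n)"
    using det_0_iff_vec_prod_zero[OF WM_carrier[of G']] lenG' by auto
  define w where "w = vec_index v n"
  define vv where "vv j = vec_index v j" for j
  define S where "S l u = (\<Sum>j\<in>{0..<n}. hasse_deriv l (G!j) * u j)" for l u
  have R: "S l vv + hasse_deriv l p * w = 0" if l: "l \<le> n" for l
  proof -
    have "vec_index (WM G' *\<^sub>v v) l = 0" using v(3) l by simp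
    moreover have "vec_index (WM G' *\<^sub>v v) l = (\<Sum>j\<in>{0..<Suc n}. hasse_deriv l (G'!j) * vec_index v j)"
      using WM_mult_vec[of v G'] v(1) l lenG' by simp
    moreover have "(\<Sum>j\<in>{0..<Suc n}. hasse_deriv l (G'!j) * vec_index v j) = S l vv + hasse_deriv l p * w"
    proof -
      have "(\<Sum>j\<in>{0..<Suc n}. hasse_deriv l (G'!j) * vec_index v j)
          = (\<Sum>j\<in>{0..<n}. hasse_deriv l (G'!j) * vec_index v j) + hasse_deriv l (G'!n) * vec_index v n"
        by simp
      also have "(\<Sum>j\<in>{0..<n}. hasse_deriv l (G'!j) * vec_index v j) = S l vv"
        unfolding S_def vv_def by (rule sum.cong) (auto simp: G'_def nth_append n_def)
      also have "G'!n = p" by (simp add: G'_def n_def)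
      finally show ?thesis by (simp add: w_def)
    qed
    ultimately show ?thesis by simp
  qed
  have inj: "\<forall>j<n. u j = 0" if H: "\<And>l. l < n \<Longrightarrow> S l u = 0" for u
  proof -
    have "WM G *\<^sub>v vec n u = 0\<^sub>v n"
      using WM_mult_vec[of "vec n u" G] H by (intro eq_vecI) (auto simp: n_def S_def)
    then have "vec n u = 0\<^sub>v n"
    proof (rule contrapos_pp)
      assume ne: "vec n u \<noteq> 0\<^sub>v n"
      have "vec n u \<in> carrier_vec (length G)" by (simp add: n_def)
      then show "WM G *\<^sub>v vec n u \<noteq> 0\<^sub>v n"
        using det_0_iff_vec_prod_zero[OF WM_carrier[of G]] nz ne unfolding n_def wr_def by blast
    qed
    then show ?thesis by (metis index_vec index_zero_vec(1))
  qed
  have wnz: "w \<noteq> 0"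
  proof
    assume w0: "w = 0"
    have "\<forall>j<n. vv j = 0" by (rule inj) (use R w0 in auto)
    then have "v = 0\<^sub>v (Suc n)" using v(1) w0 by (intro eq_vecI) (auto simp: vv_def w_def less_Suc_eq)
    with v(2) show False by simp
  qed
  have Dl: "S l (\<lambda>j. pderiv (vv j)) + hasse_deriv l p * pderiv w = 0" if l: "l < n" for l
  proof -
    have "pderiv (S l vv + hasse_deriv l p * w) =
        S l (\<lambda>j. pderiv (vv j)) + hasse_deriv l p * pderiv w + of_nat (Suc l) * (S (Suc l) vv + hasse_deriv (Suc l) p * w)"
      by (simp add: S_def pderiv_sum pderiv_add pderiv_mult pderiv_hasse sum.distrib sum_distrib_left algebra_simps)
    moreover have "pderiv (S l vv + hasse_deriv l p * w) = 0" using R[of l] l by simp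
    moreover have "S (Suc l) vv + hasse_deriv (Suc l) p * w = 0" using R[of "Suc l"] l by simp
    ultimately show ?thesis by simp
  qed
  define u where "u j = pderiv (vv j) * w - pderiv w * vv j" for j
  have u0: "\<forall>j<n. u j = 0"
  proof (rule inj)
    fix l assume l: "l < n"
    have "S l u = w * S l (\<lambda>j. pderiv (vv j)) - pderiv w * S l vv"
      by (simp add: S_def u_def sum_subtractf sum_distrib_left algebra_simps)
    also have "S l (\<lambda>j. pderiv (vv j)) = - (hasse_deriv l p * pderiv w)" using Dl[OF l] by (simp add: eq_neg_iff_add_eq_0)
    also have "S l vv = - (hasse_deriv l p * w)" using R[of l] l by (simp add: eq_neg_iff_add_eq_0)
    finally show "S l u = 0" by (simp add: algebra_simps)
  qed
  have q2: "2 \<le> q" using qprime prime_ge_2_nat by blast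
  have qm1: "of_nat (q - 1) = (- 1 :: 'a)"
  proof -
    have sq: "Suc (q - 1) = q" using q2 by simp
    have "of_nat (q - 1) + 1 = (of_nat (Suc (q - 1)) :: 'a)" by simp
    also have "\<dots> = of_nat q" by (simp only: sq)
    also have "\<dots> = 0" using of_nat_eq_0_q[OF qprime qchar] by simp
    finally show ?thesis by (simp add: eq_neg_iff_add_eq_0)
  qed
  define \<delta> where "\<delta> = w ^ q"
  define \<nu> where "\<nu> j = - (vv j * w ^ (q - 1))" for j
  have "\<delta> \<noteq> 0" using wnz by (simp add: \<delta>_def)
  moreover have "pderiv \<delta> = 0" unfolding \<delta>_def by (rule zd_power[OF qprime qchar])
  moreover have "\<forall>j<n. pderiv (\<nu> j) = 0"
  proof (intro allI impI)
    fix j assume j: "j < n"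
    have sq2: "q - 1 = Suc (q - 2)" using q2 by simp
    have e1: "w ^ (q - 1) = w ^ (q - 2) * w" by (simp only: sq2 power_Suc2)
    have sq3: "q - 1 - 1 = q - 2" by simp
    have e2: "pderiv (w ^ (q - 1)) = - (w ^ (q - 2) * pderiv w)"
      by (simp only: pderiv_power qm1 sq3) simp
    have "pderiv (vv j * w ^ (q - 1)) = vv j * pderiv (w ^ (q - 1)) + w ^ (q - 1) * pderiv (vv j)"
      by (rule pderiv_mult)
    also have "\<dots> = vv j * (- (w ^ (q - 2) * pderiv w)) + w ^ (q - 1) * pderiv (vv j)"
      by (simp only: e2)
    also have "\<dots> = vv j * (- (w ^ (q - 2) * pderiv w)) + w ^ (q - 2) * w * pderiv (vv j)"
      by (simp only: e1)
    also have "\<dots> = w ^ (q - 2) * u j"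
      by (simp add: u_def algebra_simps)
    finally have "pderiv (vv j * w ^ (q - 1)) = w ^ (q - 2) * u j" .
    then show "pderiv (\<nu> j) = 0" using u0 j by (simp add: \<nu>_def pderiv_minus)
  qed
  moreover have "\<delta> * p = (\<Sum>j\<in>{0..<n}. \<nu> j * G!j)"
  proof -
    have "S 0 vv + p * w = 0" using R[of 0] by simp
    then have wp: "w * p = - (\<Sum>j\<in>{0..<n}. G!j * vv j)" by (simp add: S_def eq_neg_iff_add_eq_0 mult.commute add.commute)
    have "\<delta> = w ^ (q - 1) * w" using q2 by (simp add: \<delta>_def power_Suc2[symmetric])
    then have "\<delta> * p = w ^ (q - 1) * (w * p)" by simp
    also have "\<dots> = w ^ (q - 1) * (- (\<Sum>j\<in>{0..<n}. G!j * vv j))" by (simp only: wp)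
    also have "\<dots> = (\<Sum>j\<in>{0..<n}. \<nu> j * G!j)"
      by (simp add: \<nu>_def sum_distrib_left sum_negf algebra_simps)
    finally show ?thesis .
  qed
  ultimately show ?thesis unfolding n_def by blast
qed

end


lemma card_mult_order_le:
  fixes p :: "'a::idom poly"
  assumes "finite T" "p \<noteq> 0" "\<And>a. a \<in> T \<Longrightarrow> n \<le> order a p"
  shows "card T * n \<le> degree p"
  using assms
proof (induct T arbitrary: p rule: finite_induct)
  case empty then show ?case by simp
next
  case (insert a T)
  have "[:-a,1:] ^ n dvd p" using insert.prems(2) by (simp add: order_divides)
  then obtain p1 where p1: "p = [:-a,1:] ^ n * p1" by (elim dvdE)
  have p1nz: "p1 \<noteq> 0" using insert.prems(1) p1 by auto
  have "card T * n \<le> degree p1"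
  proof (rule insert.hyps(3)[OF p1nz])
    fix b assume b: "b \<in> T"
    then have ba: "b \<noteq> a" using insert.hyps(2) by auto
    have "poly ([:-a,1:] ^ n) b \<noteq> 0" using ba by simp
    then have "order b ([:-a,1:] ^ n) = 0" using order_root by blast
    then have "order b p = order b p1"
      using insert.prems(1) p1 by (simp add: order_mult)
    then show "n \<le> order b p1" using insert.prems(2)[of b] b by simp
  qed
  moreover have "degree p = n + degree p1"
    using p1 p1nz by (simp add: degree_mult_eq degree_linear_power)
  ultimately show ?case using insert.hyps(1,2) by simp
qed

lemma sum_upto_le_set:
  "finite N \<Longrightarrow> (\<Sum>l\<in>{0..<card N}. l) \<le> \<Sum>N"
proof (induct "card N" arbitrary: N)
  case 0 then show ?case by simp
next
  case (Suc n)
  then have ne: "N \<noteq> {}" by auto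
  define m where "m = Max N"
  have mN: "m \<in> N" using Suc.prems ne by (simp add: m_def)
  have cN: "card (N - {m}) = n" using Suc.hyps(2) mN Suc.prems by simp
  have IH: "(\<Sum>l\<in>{0..<n}. l) \<le> \<Sum>(N - {m})" using Suc.hyps(1)[of "N - {m}"] cN Suc.prems by simp
  have "N \<subseteq> {0..m}" using Suc.prems by (auto simp: m_def)
  then have "card N \<le> Suc m" using card_mono[of "{0..m}" N] by simp
  then have nm: "n \<le> m" using Suc.hyps(2) by simp
  have "\<Sum>N = m + \<Sum>(N - {m})" using Suc.prems mN by (simp add: sum.remove)
  moreover have "(\<Sum>l\<in>{0..<card N}. l) = (\<Sum>l\<in>{0..<n}. l) + n"
    unfolding Suc.hyps(2)[symmetric] by simp
  ultimately show ?case using IH nm by simp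
qed

lemma distinct_sum_list_ge:
  "distinct J \<Longrightarrow> (\<Sum>l\<in>{0..<length J}. l) \<le> sum_list (J :: nat list)"
  using sum_upto_le_set[of "set J"] by (simp add: distinct_card distinct_sum_list_conv_Sum)

lemma two_sum_upto: "2 * (\<Sum>l\<in>{0..<r}. l) = r * (r - 1)" for r :: nat
  by (induct r) (auto simp: algebra_simps)


definition Rep :: "'a::field poly list \<Rightarrow> 'a poly \<Rightarrow> 'a poly \<Rightarrow> (nat \<Rightarrow> 'a poly) \<Rightarrow> bool" where
  "Rep G h \<delta> \<nu> \<longleftrightarrow> \<delta> \<noteq> 0 \<and> pderiv \<delta> = 0 \<and> (\<forall>j<length G. pderiv (\<nu> j) = 0) \<and>
     \<delta> * h = (\<Sum>j\<in>{0..<length G}. \<nu> j * G!j)"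

lemma Rep_add:
  assumes "Rep G h1 d1 n1" "Rep G h2 d2 n2"
  shows "Rep G (h1 + h2) (d1 * d2) (\<lambda>j. d2 * n1 j + d1 * n2 j)"
proof -
  have e1: "d1 * h1 = (\<Sum>j\<in>{0..<length G}. n1 j * G!j)" and e2: "d2 * h2 = (\<Sum>j\<in>{0..<length G}. n2 j * G!j)"
    using assms by (auto simp: Rep_def)
  have "d1 * d2 * (h1 + h2) = d2 * (d1 * h1) + d1 * (d2 * h2)" by (simp add: algebra_simps)
  also have "\<dots> = (\<Sum>j\<in>{0..<length G}. (d2 * n1 j + d1 * n2 j) * G!j)"
    by (simp only: e1 e2) (simp add: sum_distrib_left sum.distrib algebra_simps)
  finally show ?thesis using assms by (auto simp: Rep_def pderiv_mult pderiv_add)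
qed

lemma Rep_zmult:
  assumes "pderiv z = 0" "Rep G h d n"
  shows "Rep G (z * h) d (\<lambda>j. z * n j)"
proof -
  have e: "d * h = (\<Sum>j\<in>{0..<length G}. n j * G!j)" using assms by (auto simp: Rep_def)
  have "d * (z * h) = z * (d * h)" by (simp add: algebra_simps)
  also have "\<dots> = (\<Sum>j\<in>{0..<length G}. z * n j * G!j)" by (simp only: e) (simp add: sum_distrib_left algebra_simps)
  finally show ?thesis using assms by (auto simp: Rep_def pderiv_mult)
qed

lemma Rep_0: "Rep G 0 1 (\<lambda>j. 0)"
  by (simp add: Rep_def)

lemma Rep_basis:
  assumes "j0 < length G"
  shows "Rep G (G!j0) 1 (\<lambda>j. if j = j0 then 1 else 0)"
proof -
  have "(\<Sum>j\<in>{0..<length G}. (if j = j0 then 1 else 0) * G!j) = (\<Sum>j\<in>{0..<length G}. if j = j0 then G!j else 0)"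
    by (rule sum.cong) auto
  also have "\<dots> = G!j0" using assms by (simp add: sum.delta)
  finally show ?thesis by (simp add: Rep_def)
qed

context fsetup
begin

definition cand :: "nat list \<Rightarrow> bool" where
  "cand J \<longleftrightarrow> distinct J \<and> set J \<subseteq> {..<c} \<and> wr (map P J) \<noteq> 0"

lemma cand_len: "cand J \<Longrightarrow> length J \<le> c"
  unfolding cand_def by (metis card_lessThan card_mono distinct_card finite_lessThan)

lemma exists_maxcand: "\<exists>J. cand J \<and> (\<forall>J'. cand J' \<longrightarrow> length J' \<le> length J)"
proof -
  have "cand []" by (simp add: cand_def wr_Nil)
  then show ?thesis
    using ex_has_greatest_nat[of cand "[]" length "Suc c"] cand_len by (simp add: less_Suc_eq_le)
qed

end


context fsetup
begin

lemma main_structure: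
  assumes pk: "pdeg q A < k" and cM: "c < M" and Mq: "M < q" and ck: "c < k"
  shows "\<exists>r (E::'a set) (SA::'a set) (W::'a poly). r \<le> c \<and> W \<noteq> 0 \<and> finite E \<and> finite SA \<and> card E < c \<and>
     card {a. M \<le> order a A} \<le> card E + card SA \<and>
     card SA * (M - r + 1) \<le> degree W \<and> degree W + r * (r - 1) \<le> r * (k + c - 2)"
proof -
  obtain J where J: "cand J" and Jmax: "\<And>J'. cand J' \<Longrightarrow> length J' \<le> length J"
    using exists_maxcand by blast
  define G where "G = map P J"
  define r where "r = length J"
  have lenG: "length G = r" by (simp add: G_def r_def)
  have rc: "r \<le> c" using cand_len[OF J] r_def by simp
  have Wnz: "wr G \<noteq> 0" using J by (simp add: cand_def G_def)
  have Jc: "\<And>j. j < r \<Longrightarrow> J!j < c" using J unfolding cand_def r_def by (meson lessThan_iff nth_mem subsetD)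
  have RepP: "\<exists>d n. Rep G (P m) d n" if m: "m < c" for m
  proof (cases "m \<in> set J")
    case True
    then obtain j0 where j0: "j0 < r" "J!j0 = m" by (auto simp: in_set_conv_nth r_def)
    have "G!j0 = P m" using j0 by (simp add: G_def r_def)
    then show ?thesis using Rep_basis[of j0 G] j0 lenG by auto
  next
    case False
    have "\<not> cand (J @ [m])" using Jmax[of "J @ [m]"] by auto
    moreover have "distinct (J @ [m])" "set (J @ [m]) \<subseteq> {..<c}" using J False m by (auto simp: cand_def)
    ultimately have "wr (G @ [P m]) = 0" by (simp add: cand_def G_def)
    from wr_dependent[OF qprime qchar Wnz this] show ?thesis by (auto simp: Rep_def)
  qed
  have RepS: "n \<le> c \<Longrightarrow> \<exists>d v. Rep G (\<Sum>i<n. TQ ^ i * P i) d v" for n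
  proof (induct n)
    case 0 then show ?case using Rep_0 by auto
  next
    case (Suc n)
    then obtain d1 v1 where 1: "Rep G (\<Sum>i<n. TQ ^ i * P i) d1 v1" by auto
    obtain d2 v2 where 2: "Rep G (P n) d2 v2" using RepP Suc.prems by fastforce
    have "Rep G (TQ ^ n * P n) d2 (\<lambda>j. TQ ^ n * v2 j)" by (rule Rep_zmult[OF zd_TQ_power 2])
    from Rep_add[OF 1 this] show ?case by auto
  qed
  have "\<exists>d v. Rep G A d v" using RepS[of c] A_P by simp
  then have "\<exists>x. \<exists>d v. Rep G A d v \<and> degree d = x" by blast
  then obtain x where "\<exists>d v. Rep G A d v \<and> degree d = x" and xmin: "\<And>y. y < x \<Longrightarrow> \<not> (\<exists>d v. Rep G A d v \<and> degree d = y)"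
    using exists_least_iff[of "\<lambda>x. \<exists>d v. Rep G A d v \<and> degree d = x"] by blast
  then obtain \<delta> \<nu> where rep: "Rep G A \<delta> \<nu>" and dmin: "\<And>d v. Rep G A d v \<Longrightarrow> degree \<delta> \<le> degree d"
    by (metis not_le)
  have dnz: "\<delta> \<noteq> 0" and dzd: "pderiv \<delta> = 0" and nzd: "\<And>j. j < r \<Longrightarrow> pderiv (\<nu> j) = 0"
    and deq: "\<delta> * A = (\<Sum>j\<in>{0..<r}. \<nu> j * G!j)"
    using rep lenG by (auto simp: Rep_def)
  have factor_all: "\<exists>g. (\<forall>j<r. \<nu> j = [:-a,1:] ^ q * g j \<and> pderiv (g j) = 0)"
    if "\<forall>j<r. poly (\<nu> j) a = 0" for a
  proof -
    have "\<forall>j\<in>{..<r}. \<exists>g. \<nu> j = [:-a,1:] ^ q * g \<and> pderiv g = 0"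
      using zd_factor[OF qprime qchar] nzd that by blast
    then obtain g where "\<forall>j\<in>{..<r}. \<nu> j = [:-a,1:] ^ q * g j \<and> pderiv (g j) = 0"
      by (metis bchoice)
    then show ?thesis by auto
  qed
  have sum_factor: "(\<Sum>j\<in>{0..<r}. \<nu> j * G!j) = [:-a,1:] ^ q * (\<Sum>j\<in>{0..<r}. g j * G!j)"
    if "\<forall>j<r. \<nu> j = [:-a,1:] ^ q * g j \<and> pderiv (g j) = 0" for a g
    using that by (simp add: sum_distrib_left mult.assoc)
  have minprop: "\<exists>j<r. poly (\<nu> j) a \<noteq> 0" if pa: "poly \<delta> a = 0" for a
  proof (rule ccontr)
    assume "\<not> ?thesis"
    then have allz: "\<forall>j<r. poly (\<nu> j) a = 0" by auto
    obtain d1 where d1: "\<delta> = [:-a,1:] ^ q * d1" "pderiv d1 = 0"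
      using zd_factor[OF qprime qchar dzd pa] by blast
    obtain g where g: "\<forall>j<r. \<nu> j = [:-a,1:] ^ q * g j \<and> pderiv (g j) = 0"
      using factor_all[OF allz] by blast
    have Xnz: "[:-a,1:] ^ q \<noteq> 0" by simp
    have "[:-a,1:] ^ q * (d1 * A) = [:-a,1:] ^ q * (\<Sum>j\<in>{0..<r}. g j * G!j)"
      using deq sum_factor[OF g] d1(1) by (simp add: mult.assoc)
    then have e: "d1 * A = (\<Sum>j\<in>{0..<r}. g j * G!j)" using Xnz by simp
    have d1nz: "d1 \<noteq> 0" using dnz d1 by auto
    have "Rep G A d1 g" using e d1nz d1(2) g lenG by (simp add: Rep_def)
    then have "degree \<delta> \<le> degree d1" by (rule dmin)
    moreover have "degree \<delta> = q + degree d1"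
      using d1(1) d1nz by (simp add: degree_mult_eq degree_linear_power)
    moreover have "0 < q" using q2 by simp
    ultimately show False by simp
  qed
  define S where "S = {a. M \<le> order a A}"
  define E where "E = {a. q \<le> order a A}"
  define W where "W = wr G"
  define SA where "SA = {a. M - r + 1 \<le> order a W}"
  have rq: "r < q" using rc c_q by simp
  have hsum: "(\<Sum>j\<in>{0..<r}. hasse_deriv l (G!j) * \<nu> j) = \<delta> * hasse_deriv l A" if l: "l < r" for l
  proof -
    have lq: "l < q" using l rq by simp
    have "\<delta> * hasse_deriv l A = hasse_deriv l (\<delta> * A)" using hasse_zd_mult[OF qprime qchar dzd lq] by simp
    also have "\<dots> = (\<Sum>j\<in>{0..<r}. hasse_deriv l (\<nu> j * G!j))" by (simp add: deq hasse_sum)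
    also have "\<dots> = (\<Sum>j\<in>{0..<r}. hasse_deriv l (G!j) * \<nu> j)"
      by (rule sum.cong) (auto simp: hasse_zd_mult[OF qprime qchar nzd lq] mult.commute)
    finally show ?thesis by simp
  qed
  have SsubE: "S \<subseteq> E \<union> SA"
  proof
    fix a assume "a \<in> S"
    then have aM: "[:-a,1:] ^ M dvd A" by (simp add: S_def order_divides)
    show "a \<in> E \<union> SA"
    proof (cases "\<exists>j<r. poly (\<nu> j) a \<noteq> 0")
      case True
      then obtain j0 where j0: "j0 < r" "poly (\<nu> j0) a \<noteq> 0" by blast
      define D where "D = [:-a,1:] ^ (M - r + 1)"
      have "D dvd vec_index (vec r \<nu>) j0 * wr G"
      proof (rule wr_cramer_dvd[where h="\<lambda>l. \<delta> * hasse_deriv l A"])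
        show "vec r \<nu> \<in> carrier_vec (length G)" using lenG by simp
        show "j0 < length G" using j0 lenG by simp
        fix l assume l: "l < length G"
        show "(\<Sum>j\<in>{0..<length G}. hasse_deriv l (G!j) * vec_index (vec r \<nu>) j) = \<delta> * hasse_deriv l A"
          using hsum[of l] l lenG by simp
        have "[:-a,1:] ^ (M - l) dvd hasse_deriv l A" using hasse_dvd[OF aM] .
        moreover have "D dvd [:-a,1:] ^ (M - l)" unfolding D_def
          using l lenG cM rc by (intro le_imp_power_dvd) simp
        ultimately show "D dvd \<delta> * hasse_deriv l A" by (meson dvd_mult dvd_trans)
      qed
      then have Ddvd: "D dvd \<nu> j0 * W" using j0 by (simp add: W_def)
      have nnz: "\<nu> j0 \<noteq> 0" using j0 by auto
      have Wnz': "W \<noteq> 0" using Wnz by (simp add: W_def)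
      have "M - r + 1 \<le> order a (\<nu> j0 * W)" using Ddvd nnz Wnz' unfolding D_def order_divides by simp
      also have "\<dots> = order a (\<nu> j0) + order a W" using nnz Wnz' by (simp add: order_mult)
      also have "order a (\<nu> j0) = 0" using j0(2) order_root by blast
      finally show ?thesis by (simp add: SA_def)
    next
      case False
      then have allz: "\<forall>j<r. poly (\<nu> j) a = 0" by auto
      then have pd: "poly \<delta> a \<noteq> 0" using minprop by blast
      obtain g where g: "\<forall>j<r. \<nu> j = [:-a,1:] ^ q * g j \<and> pderiv (g j) = 0"
        using factor_all[OF allz] by blast
      have "[:-a,1:] ^ q dvd \<delta> * A" using deq sum_factor[OF g] by simp
      then have "q \<le> order a (\<delta> * A)" using dnz A_nz by (simp add: order_divides)
      also have "\<dots> = order a \<delta> + order a A" using dnz A_nz by (simp add: order_mult)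
      also have "order a \<delta> = 0" using pd order_root by blast
      finally show ?thesis by (simp add: E_def)
    qed
  qed
  have cardE: "card E < c"
  proof -
    have "card E * q \<le> degree A" by (rule card_mult_order_le) (auto simp: E_def A_nz)
    then have "card E * q < c * q" using degA by linarith
    then show ?thesis by (simp add: mult_less_cancel2)
  qed
  have cardSA: "card SA * (M - r + 1) \<le> degree W"
    by (rule card_mult_order_le) (auto simp: SA_def W_def Wnz)
  have cardS: "card S \<le> card E + card SA"
    using card_mono[OF _ SsubE] card_Un_le[of E SA] by simp
  define e where "e j = k + c - 2 - J!j" for j
  have edeg: "degree (G!j) \<le> e j" if j: "j < length G" for j
  proof -
    have jc: "J!j < c" using Jc j lenG by simp
    have "lowdeg (k + c - 1 - J!j) (P (J!j))" using P_low[OF pk jc] .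
    moreover have "0 < k + c - 1 - J!j" using jc ck by simp
    ultimately have "degree (P (J!j)) \<le> k + c - 1 - J!j - 1" by (rule lowdeg_degree')
    then show ?thesis using j lenG by (simp add: G_def e_def)
  qed
  have dW: "degree W + (\<Sum>l\<in>{0..<r}. l) \<le> (\<Sum>j\<in>{0..<r}. e j)"
    using wr_degree[OF Wnz edeg] lenG by (simp add: W_def)
  have esum: "(\<Sum>j\<in>{0..<r}. e j) + sum_list J = r * (k + c - 2)"
  proof -
    have "(\<Sum>j\<in>{0..<r}. e j) + sum_list J = (\<Sum>j\<in>{0..<r}. e j + J!j)"
      by (simp add: sum.distrib sum_list_sum_nth r_def)
    also have "\<dots> = (\<Sum>j\<in>{0..<r}. k + c - 2)"
    proof (rule sum.cong)
      fix x assume "x \<in> {0..<r}"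
      then have "J!x < c" using Jc by simp
      then show "e x + J!x = k + c - 2" using ck by (simp add: e_def)
    qed simp
    finally show ?thesis by simp
  qed
  have dist: "(\<Sum>l\<in>{0..<r}. l) \<le> sum_list J"
    using distinct_sum_list_ge[of J] J by (simp add: cand_def r_def)
  have fin1: "degree W + r * (r - 1) \<le> r * (k + c - 2)"
    using dW esum dist two_sum_upto[of r] by linarith
  have fin2: "W \<noteq> 0" using Wnz by (simp add: W_def)
  have fin3: "finite E" "finite SA" by simp_all
  have cardS': "card {a. M \<le> order a A} \<le> card E + card SA" using cardS by (simp add: S_def)
  have "r \<le> c \<and> W \<noteq> 0 \<and> finite E \<and> finite SA \<and> card E < c \<and>
     card {a. M \<le> order a A} \<le> card E + card SA \<and>
     card SA * (M - r + 1) \<le> degree W \<and> degree W + r * (r - 1) \<le> r * (k + c - 2)"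
    using rc fin2 fin3 cardE cardS' cardSA fin1 by blast
  then show ?thesis by blast
qed

end


lemma final_arith:
  fixes s e a dW r c k M :: nat
  assumes "s \<le> e + a" "e < c" "a * (M - r + 1) \<le> dW" "dW + r * (r - 1) \<le> r * (k + c - 2)"
    "r \<le> c" "c < k" "c < M" "0 < c"
  shows "(int s - int c) * (int M - int c + 1) \<le> int c * int k"
proof (cases "s \<le> c")
  case True
  have "(int s - int c) * (int M - int c + 1) \<le> 0"
    using True assms(7) by (intro mult_nonpos_nonneg) auto
  also have "0 \<le> int c * int k" by simp
  finally show ?thesis .
next
  case False
  have a1: "int s - int c + 1 \<le> int a" using assms(1,2) by linarith
  have Mr: "int (M - r + 1) = int M - int r + 1" using assms(5,7) by simp
  have kc2: "int (k + c - 2) = int k + int c - 2" using assms(6,8) by simp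
  have rr: "int (r * (r - 1)) = int r * (int r - 1)" by (cases r) (auto simp: algebra_simps)
  have h1: "(int s - int c) * (int M - int c + 1) \<le> (int s - int c + 1) * (int M - int r + 1)"
    using False assms(5,7) by (intro mult_mono) auto
  have h2: "(int s - int c + 1) * (int M - int r + 1) \<le> int a * (int M - int r + 1)"
    using a1 assms(5,7) by (intro mult_right_mono) auto
  have h3: "int a * (int M - int r + 1) \<le> int dW"
    using assms(3) Mr by (metis of_nat_le_iff of_nat_mult)
  have h4: "int dW + int r * (int r - 1) \<le> int r * (int k + int c - 2)"
    using assms(4) kc2 rr by (metis of_nat_add of_nat_le_iff of_nat_mult)
  have h5: "int r * (int k + int c - 2) - int r * (int r - 1) \<le> int c * int k"
  proof (cases "r = c")
    case True
    then show ?thesis by (simp add: algebra_simps)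
  next
    case False
    then have rc: "int r < int c" using assms(5) by simp
    have "int r * (int c - 1 - int r) \<le> int k * (int c - 1 - int r)"
      using rc assms(5,6) by (intro mult_right_mono) auto
    then show ?thesis by (simp add: algebra_simps)
  qed
  show ?thesis using h1 h2 h3 h4 h5 by linarith
qed

theorem theorem5p4:
  fixes A :: "'a::{field,finite} poly"
    and q c k M :: nat
  assumes "prime q" and "card (UNIV :: 'a set) = q"
    and "0 < c" and "0 < k" and "0 < M"
    and "c < M" and "M < q"
    and "A \<noteq> 0"
    and "degree A < c * q"
    and "pdeg q A < k"
  shows "real (card {\<alpha>::'a. order \<alpha> A \<ge> M})
           \<le> min (real c / real (M - c + 1) * real k + real c) (real k)"
proof -
  interpret fsetup A q c using assms by unfold_locales auto
  define s where "s = card {\<alpha>::'a. order \<alpha> A \<ge> M}"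
  have sk: "s < k" using easy_bound[OF assms(10) assms(6)] by (simp add: s_def)
  have pos: "0 < real (M - c + 1)" by simp
  have rM: "real (M - c + 1) = real M - real c + 1" using assms(6) by (simp add: of_nat_diff)
  have b1: "real s \<le> real c / real (M - c + 1) * real k + real c"
  proof (cases "k \<le> c")
    case True
    have "0 \<le> real c / real (M - c + 1) * real k" by simp
    moreover have "real s \<le> real c" using sk True by simp
    ultimately show ?thesis by linarith
  next
    case False
    then have ck: "c < k" by simp
    obtain r and E SA :: "'a set" and W :: "'a poly" where st: "r \<le> c" "W \<noteq> 0" "finite E" "finite SA" "card E < c"
      "card {a. M \<le> order a A} \<le> card E + card SA"
      "card SA * (M - r + 1) \<le> degree W" "degree W + r * (r - 1) \<le> r * (k + c - 2)"
      using main_structure[OF assms(10) assms(6) assms(7) ck] by blast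
    have "(int s - int c) * (int M - int c + 1) \<le> int c * int k"
      by (rule final_arith[OF _ st(5) st(7) st(8) st(1) ck assms(6) assms(3)]) (use st(6) s_def in simp)
    then have "real_of_int ((int s - int c) * (int M - int c + 1)) \<le> real_of_int (int c * int k)"
      by (simp only: of_int_le_iff)
    then have "(real s - real c) * real (M - c + 1) \<le> real c * real k"
      unfolding rM by simp
    then have "real s - real c \<le> real c * real k / real (M - c + 1)"
      using pos by (simp add: pos_le_divide_eq)
    then show ?thesis by simp
  qed
  show ?thesis using b1 sk by (simp add: s_def)
qed


end
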